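(* Let $\mathcal Q_1,\dots,\mathcal Q_l\subseteq V$ be linear subspaces. The following are equivalent: (1) the sequence of ideals $(\mathcal Q_1),\dots,(\mathcal Q_l)$ of $S=K[V]$ is linearly joined; (2) for all $i=1,\dots,l$ there exist linear subspaces $\mathcal D_i,\mathcal P_i\subseteq V$, with $\mathcal D_l=0$ and $\mathcal P_1=0$, such that (a) $\mathcal Q_i=\mathcal D_i\oplus\mathcal P_i$; (b) $\mathcal D_1\supseteq\mathcal D_2\supseteq\dots\supseteq\mathcal D_l$; (c) $\bigcap_{j=1}^{k-1}(\mathcal Q_j)\subseteq(\mathcal P_k,\mathcal D_{k-1})$ for all $k=2,\dots,l$.
   Context: $K$ is a field, $V$ a $K$-vector space of dimension $r+1$, $S=K[V]$ the polynomial ring, $\mathbb P^r$ the associated projective space. For $Q\subseteq V$, $(Q)$ is the ideal of $S$ generated by $Q$; $(\mathcal P,\mathcal D)$ is the ideal generated by $\mathcal P\cup\mathcal D$. The ideal $(\mathcal Q_i)$ defines a linear subspace $\mathcal L_i\subseteq\mathbb P^r$. A sequence $\mathcal L_1,\dots,\mathcal L_l$ of (irreducible) projective subvarieties is linearly joined if for every $i=1,\dots,l-1$, $\mathcal L_{i+1}\cap(\mathcal L_1\cup\dots\cup\mathcal L_i)=\mathrm{span}(\mathcal L_{i+1})\cap\mathrm{span}(\mathcal L_1\cup\dots\cup\mathcal L_i)$, where $\mathrm{span}$ is the smallest linear subspace containing the set; the sequence of ideals is called linearly joined if the sequence of varieties they define is. *)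

theory Defs
  imports "HOL-Analysis.Analysis" "HOL-Library.Poly_Mapping" "HOL-Algebra.Algebraic_Closure_Type"
begin

(* V = K^(r+1) (coordinates of linear forms w.r.t. a basis x_i, i ranging over the
  finite type 'n, so r+1 = CARD('n)); S = K[V] = K[x_i | i :: 'n] is modelled by
  ('n \<Rightarrow>\<^sub>0 nat) \<Rightarrow>\<^sub>0 'k (monomial exponents to coefficients).*)

type_synonym ('k, 'n) mpoly = "('n \<Rightarrow>\<^sub>0 nat) \<Rightarrow>\<^sub>0 'k"

definition lin_form :: "'k::field ^ 'n::finite \<Rightarrow> ('k, 'n) mpoly" where
  "lin_form c = (\<Sum>i\<in>UNIV. Poly_Mapping.single (Poly_Mapping.single i 1) (c $ i))"

definition gen_ideal :: "'a::comm_ring_1 set \<Rightarrow> 'a set" where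
  "gen_ideal G = {p. \<exists>F a. finite F \<and> F \<subseteq> G \<and> p = (\<Sum>g\<in>F. a g * g)}"

definition lin_ideal :: "('k::field ^ 'n::finite) set \<Rightarrow> ('k, 'n) mpoly set" where
  "lin_ideal Q = gen_ideal (lin_form ` Q)"

(* Zero locus of a set of linear forms, as an affine cone over the algebraic closure of K
  (the points of the projective variety are the nonzero points of this cone up to scaling;
  the linear-joinedness condition is insensitive to this passage to cones).*)
definition zero_locus :: "('k::field ^ 'n::finite) set \<Rightarrow> ('k alg_closure ^ 'n) set" where
  "zero_locus Q = {x. \<forall>c\<in>Q. (\<Sum>i\<in>UNIV. to_ac (c $ i) * x $ i) = 0}"

definition linearly_joined :: "(nat \<Rightarrow> ('a::field ^ 'n::finite) set) \<Rightarrow> nat \<Rightarrow> bool" where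
  "linearly_joined L l \<longleftrightarrow>
     (\<forall>i\<in>{1..<l}. L (i+1) \<inter> (\<Union>j\<in>{1..i}. L j) =
                     vec.span (L (i+1)) \<inter> vec.span (\<Union>j\<in>{1..i}. L j))"

definition ideals_linearly_joined :: "(nat \<Rightarrow> ('k::field ^ 'n::finite) set) \<Rightarrow> nat \<Rightarrow> bool" where
  "ideals_linearly_joined Q l \<longleftrightarrow> linearly_joined (\<lambda>i. zero_locus (Q i)) l"

definition direct_sum_eq :: "('k::field ^ 'n::finite) set \<Rightarrow> ('k ^ 'n) set \<Rightarrow> ('k ^ 'n) set \<Rightarrow> bool" where
  "direct_sum_eq Q D P \<longleftrightarrow> Q = {d + p | d p. d \<in> D \<and> p \<in> P} \<and> D \<inter> P = {0}"

end

theory Submission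
  imports Defs
begin

no_notation fps_nth (infixl \<open>$\<close> 75)

definition monac :: "'k::field alg_closure ^ 'n::finite \<Rightarrow> ('n \<Rightarrow>\<^sub>0 nat) \<Rightarrow> 'k alg_closure" where
  "monac x m = (\<Prod>i\<in>UNIV. x $ i ^ Poly_Mapping.lookup m i)"

definition ev :: "'k::field alg_closure ^ 'n::finite \<Rightarrow> ('k, 'n) mpoly \<Rightarrow> 'k alg_closure" where
  "ev x p = (\<Sum>m\<in>Poly_Mapping.keys p. to_ac (Poly_Mapping.lookup p m) * monac x m)"

lemma ev_superset: "finite S \<Longrightarrow> Poly_Mapping.keys p \<subseteq> S \<Longrightarrow> ev x p = (\<Sum>m\<in>S. to_ac (Poly_Mapping.lookup p m) * monac x m)"
  unfolding ev_def by (rule sum.mono_neutral_left) (auto simp: in_keys_iff)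

lemma ev_zero[simp]: "ev x 0 = 0" by (simp add: ev_def)

lemma ev_add: "ev x (p + q) = ev x p + ev x q"
proof -
  have f: "finite (Poly_Mapping.keys p \<union> Poly_Mapping.keys q)" by simp
  have "ev x (p + q) = (\<Sum>m\<in>Poly_Mapping.keys p \<union> Poly_Mapping.keys q. to_ac (Poly_Mapping.lookup (p+q) m) * monac x m)"
    by (rule ev_superset[OF f keys_add])
  also have "\<dots> = (\<Sum>m\<in>Poly_Mapping.keys p \<union> Poly_Mapping.keys q. to_ac (Poly_Mapping.lookup p m) * monac x m)
     + (\<Sum>m\<in>Poly_Mapping.keys p \<union> Poly_Mapping.keys q. to_ac (Poly_Mapping.lookup q m) * monac x m)"
    by (simp add: lookup_add sum.distrib distrib_right)
  also have "\<dots> = ev x p + ev x q"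
    by (simp add: ev_superset[OF f])
  finally show ?thesis .
qed

lemma ev_sum: "ev x (\<Sum>i\<in>A. f i) = (\<Sum>i\<in>A. ev x (f i))"
proof (induction A rule: infinite_finite_induct)
  case (insert a A) then show ?case by (simp add: ev_add)
qed simp_all

lemma ev_single: "ev x (Poly_Mapping.single m a) = to_ac a * monac x m"
  by (subst ev_superset[of "{m}"]) auto

lemma mon_add: "monac x (m + m') = monac x m * monac x m'"
  unfolding monac_def by (simp add: lookup_add power_add prod.distrib)

lemma pm_expand: "p = (\<Sum>m\<in>Poly_Mapping.keys p. Poly_Mapping.single m (Poly_Mapping.lookup p m))"
proof (rule poly_mapping_eqI)
  fix k
  have "Poly_Mapping.lookup (\<Sum>m\<in>Poly_Mapping.keys p. Poly_Mapping.single m (Poly_Mapping.lookup p m)) k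
     = (\<Sum>m\<in>Poly_Mapping.keys p. if m = k then Poly_Mapping.lookup p m else 0)"
    by (simp add: lookup_sum lookup_single when_def)
  also have "\<dots> = Poly_Mapping.lookup p k"
    by (simp add: in_keys_iff)
  finally show "Poly_Mapping.lookup p k = Poly_Mapping.lookup (\<Sum>m\<in>Poly_Mapping.keys p. Poly_Mapping.single m (Poly_Mapping.lookup p m)) k" by simp
qed

lemma ev_mult: "ev x (p * q) = ev x p * ev x q"
proof -
  let ?P = "Poly_Mapping.keys p" and ?Q = "Poly_Mapping.keys q"
  have "p * q = (\<Sum>m\<in>?P. Poly_Mapping.single m (Poly_Mapping.lookup p m)) * (\<Sum>m\<in>?Q. Poly_Mapping.single m (Poly_Mapping.lookup q m))"
    using pm_expand[of p] pm_expand[of q] by simp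
  also have "\<dots> = (\<Sum>m\<in>?P. \<Sum>m'\<in>?Q. Poly_Mapping.single m (Poly_Mapping.lookup p m) * Poly_Mapping.single m' (Poly_Mapping.lookup q m'))"
    by (rule sum_product)
  also have "\<dots> = (\<Sum>m\<in>?P. \<Sum>m'\<in>?Q. Poly_Mapping.single (m+m') (Poly_Mapping.lookup p m * Poly_Mapping.lookup q m'))"
    by (simp only: mult_single)
  finally have "ev x (p*q) = (\<Sum>m\<in>?P. \<Sum>m'\<in>?Q. ev x (Poly_Mapping.single (m+m') (Poly_Mapping.lookup p m * Poly_Mapping.lookup q m')))"
    by (simp only: ev_sum)
  also have "\<dots> = (\<Sum>m\<in>?P. \<Sum>m'\<in>?Q. to_ac (Poly_Mapping.lookup p m) * monac x m * (to_ac (Poly_Mapping.lookup q m') * monac x m'))"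
    by (simp only: ev_single mon_add to_ac_mult mult_ac)
  also have "\<dots> = ev x p * ev x q" by (simp only: ev_def sum_product)
  finally show ?thesis .
qed

lemma ev_one: "ev x 1 = 1"
proof -
  have "ev x 1 = ev x (Poly_Mapping.single 0 1)" by simp
  then have "ev x 1 = to_ac 1 * monac x 0" by (simp only: ev_single)
  then show ?thesis by (simp add: monac_def)
qed

lemma ev_prod: "ev x (\<Prod>i\<in>A. f i) = (\<Prod>i\<in>A. ev x (f i))"
proof (induction A rule: infinite_finite_induct)
  case (insert a A) then show ?case by (simp add: ev_mult)
qed (simp_all add: ev_one)

definition dotc :: "'k::field ^ 'n::finite \<Rightarrow> 'k alg_closure ^ 'n \<Rightarrow> 'k alg_closure" where
  "dotc c x = (\<Sum>i\<in>UNIV. to_ac (c $ i) * x $ i)"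

definition dotk :: "'k::field ^ 'n::finite \<Rightarrow> 'k ^ 'n \<Rightarrow> 'k" where
  "dotk c y = (\<Sum>i\<in>UNIV. c $ i * y $ i)"

lemma infinite_ac: "infinite (UNIV :: 'k::field alg_closure set)"
proof
  assume fin: "finite (UNIV :: 'k alg_closure set)"
  define q where "q = (\<Prod>a\<in>(UNIV :: 'k alg_closure set). [:-a, 1:])"
  have "Polynomial.degree q = (\<Sum>a\<in>(UNIV :: 'k alg_closure set). Polynomial.degree [:-a, 1:])"
    unfolding q_def by (rule degree_prod_eq_sum_degree) simp
  also have "\<dots> = card (UNIV :: 'k alg_closure set)" by simp
  finally have dq: "Polynomial.degree q = card (UNIV :: 'k alg_closure set)" .
  have "card (UNIV :: 'k alg_closure set) > 0" using fin by (simp add: card_gt_0_iff)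
  with dq have dq0: "Polynomial.degree q > 0" by simp
  have "Polynomial.degree (q + 1) = Polynomial.degree q" by (rule degree_add_eq_left) (use dq0 in simp)
  with dq0 have "Polynomial.degree (q + 1) > 0" by simp
  then obtain x where x: "poly (q + 1) x = 0" using alg_closed_imp_poly_has_root by blast
  have "poly q x = (\<Prod>a\<in>(UNIV :: 'k alg_closure set). x - a)" unfolding q_def by (simp add: poly_prod)
  also have "\<dots> = 0" using fin by (simp add: prod_zero_iff)
  finally show False using x by simp
qed


lemma sep:
  fixes E :: "('k::field ^ 'n::finite) set"
  assumes E: "vec.subspace E" and a: "a \<notin> E"
  shows "\<exists>x. (\<forall>e\<in>E. dotk e x = 0) \<and> dotk a x \<noteq> 0"
proof -
  obtain B0 where B0: "B0 \<subseteq> E" "vec.independent B0" "E \<subseteq> vec.span B0" "card B0 = vec.dim E"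
    by (rule vec.basis_exists)
  have "vec.span B0 \<subseteq> E" using B0(1) E by (rule vec.span_minimal)
  then have aB: "a \<notin> vec.span B0" using a by (meson subsetD)
  have indep: "vec.independent (insert a B0)" using vec.independent_insertI[OF aB B0(2)] .
  interpret vp: vector_space_pair "(*s) :: 'k \<Rightarrow> 'k^'n \<Rightarrow> 'k^'n" "(*) :: 'k \<Rightarrow> 'k \<Rightarrow> 'k"
    by unfold_locales
  define f where "f = vp.construct (insert a B0) (\<lambda>b. if b = a then 1 else 0)"
  have lin: "Vector_Spaces.linear (*s) (*) f" unfolding f_def by (rule vp.linear_construct[OF indep])
  then interpret fl: Vector_Spaces.linear "(*s) :: 'k \<Rightarrow> 'k^'n \<Rightarrow> 'k^'n" "(*) :: 'k \<Rightarrow> 'k \<Rightarrow> 'k" f .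
  have fa: "f a = 1" unfolding f_def by (subst vp.construct_basis[OF indep]) simp_all
  have fB: "f b = 0" if "b \<in> B0" for b
  proof -
    have "b \<noteq> a" using that B0(1) a by (meson subsetD)
    then show ?thesis unfolding f_def using that by (subst vp.construct_basis[OF indep]) simp_all
  qed
  have ker: "vec.subspace {y. f y = 0}"
    unfolding vec.subspace_def by (simp add: fl.add fl.scale)
  have "vec.span B0 \<subseteq> {y. f y = 0}" by (rule vec.span_minimal) (use fB ker in force)+
  with B0(3) have fE: "f e = 0" if "e \<in> E" for e using that by (meson subsetD mem_Collect_eq)
  define x where "x = (\<chi> i. f (axis i 1))"
  have rep: "f y = dotk y x" for y
  proof -
    have "f y = f (\<Sum>i\<in>UNIV. y $ i *s axis i 1)" by (simp add: basis_expansion)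
    also have "\<dots> = (\<Sum>i\<in>UNIV. y $ i * f (axis i 1))" by (simp add: fl.sum fl.scale)
    finally show ?thesis by (simp add: dotk_def x_def)
  qed
  show ?thesis using fE fa rep by (intro exI[of _ x]) simp
qed

lemma dotc_add: "dotc c (vv + ww) = dotc c vv + dotc c ww"
  by (simp add: dotc_def distrib_left sum.distrib)
lemma dotc_scale: "dotc c (t *s vv) = t * dotc c vv"
  by (simp add: dotc_def sum_distrib_left mult_ac)
lemma dotk_add: "dotk c (vv + ww) = dotk c vv + dotk c ww"
  by (simp add: dotk_def distrib_left sum.distrib)
lemma dotk_scale: "dotk c (t *s vv) = t * dotk c vv"
  by (simp add: dotk_def sum_distrib_left mult_ac)
lemma dotk_sym: "dotk a b = dotk b a"
  by (simp add: dotk_def mult.commute)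

lemma gen:
  fixes U :: "('k::field alg_closure ^ 'n::finite) set"
  assumes U: "vec.subspace U" and J: "finite J"
    and u: "\<forall>j\<in>J. u j \<in> U \<and> dotc (a j) (u j) \<noteq> 0"
  shows "\<exists>vv\<in>U. \<forall>j\<in>J. dotc (a j) vv \<noteq> 0"
using J u proof (induction J rule: finite_induct)
  case empty show ?case using vec.subspace_0[OF U] by auto
next
  case (insert j0 J)
  then obtain vv where vv: "vv \<in> U" "\<forall>j\<in>J. dotc (a j) vv \<noteq> 0" by auto
  define B where "B = (\<lambda>j. - dotc (a j) vv / dotc (a j) (u j0)) ` insert j0 J"
  have "finite B" using insert by (simp add: B_def)
  then obtain t where t: "t \<notin> B" using infinite_ac ex_new_if_finite by metis
  show ?case
  proof (intro bexI ballI)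
    show "vv + t *s u j0 \<in> U" using U vv insert.prems by (simp add: vec.subspace_add vec.subspace_scale)
    fix j assume j: "j \<in> insert j0 J"
    show "dotc (a j) (vv + t *s u j0) \<noteq> 0"
    proof
      assume 0: "dotc (a j) (vv + t *s u j0) = 0"
      have e: "dotc (a j) vv + t * dotc (a j) (u j0) = 0" using 0 by (simp add: dotc_add dotc_scale)
      show False
      proof (cases "dotc (a j) (u j0) = 0")
        case True
        then have "j \<noteq> j0" using insert.prems by auto
        then have "j \<in> J" using j by simp
        with vv True e show False by simp
      next
        case False
        then have "t = - dotc (a j) vv / dotc (a j) (u j0)" using e by (simp add: field_simps add_eq_0_iff)
        then have "t \<in> B" using j unfolding B_def by (intro image_eqI)
        with t show False by simp
      qed
    qed
  qed
qed

definition perp :: "('k::field ^ 'n::finite) set \<Rightarrow> ('k ^ 'n) set" where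
  "perp A = {x. \<forall>a\<in>A. dotk a x = 0}"

lemma dual:
  fixes Q :: "'i \<Rightarrow> ('k::field ^ 'n::finite) set"
  assumes Qs: "\<forall>i\<in>I. vec.subspace (Q i)" and y: "\<forall>c\<in>(\<Inter>i\<in>I. Q i). dotk c y = 0"
  shows "y \<in> vec.span (\<Union>i\<in>I. perp (Q i))"
proof (rule ccontr)
  let ?S = "vec.span (\<Union>i\<in>I. perp (Q i))"
  assume "y \<notin> ?S"
  from sep[OF vec.subspace_span this] obtain z where z: "\<forall>s\<in>?S. dotk s z = 0" "dotk y z \<noteq> 0"
    by (elim exE conjE)
  have "z \<in> Q i" if i: "i \<in> I" for i
  proof (rule ccontr)
    assume "z \<notin> Q i"
    from sep[OF _ this] Qs i obtain w where w: "\<forall>q\<in>Q i. dotk q w = 0" "dotk z w \<noteq> 0"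
      by (meson)
    have "w \<in> perp (Q i)" using w(1) by (simp add: perp_def)
    then have "w \<in> ?S" using i by (meson UN_I vec.span_base)
    then have "dotk w z = 0" using z(1) by simp
    with w(2) show False by (simp add: dotk_sym)
  qed
  then have "z \<in> (\<Inter>i\<in>I. Q i)" by simp
  with y have "dotk z y = 0" by simp
  with z(2) show False by (simp add: dotk_sym)
qed


definition emb :: "'k::field ^ 'n::finite \<Rightarrow> 'k alg_closure ^ 'n" where
  "emb y = (\<chi> i. to_ac (y $ i))"

lemma dotc_emb: "dotc c (emb y) = to_ac (dotk c y)"
  by (simp add: dotc_def dotk_def emb_def to_ac_sum)

lemma emb_add: "emb (x + y) = emb x + emb y"
  by (simp add: emb_def vec_eq_iff)
lemma emb_scale: "emb (c *s y) = to_ac c *s emb y"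
  by (simp add: emb_def vec_eq_iff)
lemma emb_zero: "emb 0 = 0"
  by (simp add: emb_def vec_eq_iff)

lemma zl: "x \<in> zero_locus Q \<longleftrightarrow> (\<forall>c\<in>Q. dotc c x = 0)"
  by (simp add: zero_locus_def dotc_def)

lemma zl_eq: "zero_locus Q = {x. \<forall>c\<in>Q. dotc c x = 0}"
  by (simp add: zero_locus_def dotc_def)

lemma dotc_zero: "dotc c 0 = 0" by (simp add: dotc_def)

lemma zl_subspace: "vec.subspace (zero_locus Q)"
  unfolding zl_eq vec.subspace_def by (simp add: dotc_add dotc_scale dotc_zero)

lemma span_emb:
  assumes "y \<in> vec.span (\<Union>i\<in>I. perp (Q i))"
  shows "emb y \<in> vec.span (\<Union>i\<in>I. zero_locus (Q i))"
proof -
  let ?T = "vec.span (\<Union>i\<in>I. zero_locus (Q i))"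
  have M: "vec.subspace {y. emb y \<in> ?T}"
    unfolding vec.subspace_def
    by (simp add: emb_add emb_scale emb_zero vec.span_zero vec.span_add vec.span_scale)
  have "(\<Union>i\<in>I. perp (Q i)) \<subseteq> {y. emb y \<in> ?T}"
  proof
    fix y assume "y \<in> (\<Union>i\<in>I. perp (Q i))"
    then obtain i where i: "i \<in> I" "y \<in> perp (Q i)" by (meson UN_E)
    then have "emb y \<in> zero_locus (Q i)" by (simp add: zl dotc_emb perp_def)
    then have "emb y \<in> ?T" using i(1) by (meson UN_I vec.span_base)
    then show "y \<in> {y. emb y \<in> ?T}" by simp
  qed
  then have "vec.span (\<Union>i\<in>I. perp (Q i)) \<subseteq> {y. emb y \<in> ?T}" using M by (rule vec.span_minimal)
  then show ?thesis using assms by (meson subsetD mem_Collect_eq)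
qed

lemma key:
  fixes Q :: "'i \<Rightarrow> ('k::field ^ 'n::finite) set"
  assumes Qs: "\<forall>i\<in>I. vec.subspace (Q i)" and B: "vec.subspace B" and I: "finite I"
    and LJ: "zero_locus B \<inter> (\<Union>i\<in>I. zero_locus (Q i)) = zero_locus B \<inter> vec.span (\<Union>i\<in>I. zero_locus (Q i))"
  shows "\<exists>j\<in>I. \<forall>a\<in>Q j. \<exists>b\<in>B. \<exists>c\<in>(\<Inter>i\<in>I. Q i). a = b + c"
proof (rule ccontr)
  let ?C = "\<Inter>i\<in>I. Q i"
  define E where "E = {b + c | b c. b \<in> B \<and> c \<in> ?C}"
  have C: "vec.subspace ?C" using Qs by (simp add: vec.subspace_Int)
  have E: "vec.subspace E"
  proof -
    have memE: "b + c \<in> E" if "b \<in> B" "c \<in> ?C" for b c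
      unfolding E_def using that by (intro CollectI exI conjI) (rule refl)
    have E0: "0 \<in> E" using memE[OF vec.subspace_0[OF B] vec.subspace_0[OF C]] by simp
    have Eadd: "x + y \<in> E" if "x \<in> E" "y \<in> E" for x y
    proof -
      obtain b c where 1: "x = b + c" "b \<in> B" "c \<in> ?C" using \<open>x \<in> E\<close> unfolding E_def by (elim CollectE exE conjE)
      obtain b' c' where 2: "y = b' + c'" "b' \<in> B" "c' \<in> ?C" using \<open>y \<in> E\<close> unfolding E_def by (elim CollectE exE conjE)
      have "x + y = (b + b') + (c + c')" using 1 2 by (simp add: algebra_simps)
      moreover have "(b + b') + (c + c') \<in> E"
        by (rule memE[OF vec.subspace_add[OF B 1(2) 2(2)] vec.subspace_add[OF C 1(3) 2(3)]])
      ultimately show ?thesis by simp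
    qed
    have Escale: "r *s x \<in> E" if "x \<in> E" for r x
    proof -
      obtain b c where 1: "x = b + c" "b \<in> B" "c \<in> ?C" using \<open>x \<in> E\<close> unfolding E_def by (elim CollectE exE conjE)
      have "r *s x = r *s b + r *s c" using 1 by (simp add: vec.scale_right_distrib)
      moreover have "r *s b + r *s c \<in> E"
        by (rule memE[OF vec.subspace_scale[OF B 1(2)] vec.subspace_scale[OF C 1(3)]])
      ultimately show ?thesis by simp
    qed
    show ?thesis unfolding vec.subspace_def using E0 Eadd Escale by simp
  qed
  assume "\<not> ?thesis"
  then have "\<forall>j\<in>I. \<exists>a\<in>Q j. a \<notin> E" unfolding E_def by (simp only: mem_Collect_eq) meson
  then obtain a where a: "\<forall>j\<in>I. a j \<in> Q j \<and> a j \<notin> E" by metis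
  have "\<forall>j\<in>I. \<exists>x. (\<forall>e\<in>E. dotk e x = 0) \<and> dotk (a j) x \<noteq> 0" using a sep[OF E] by metis
  then obtain x where x: "\<forall>j\<in>I. (\<forall>e\<in>E. dotk e (x j) = 0) \<and> dotk (a j) (x j) \<noteq> 0" by metis
  let ?U = "zero_locus B \<inter> vec.span (\<Union>i\<in>I. zero_locus (Q i))"
  have U: "vec.subspace ?U" by (intro vec.subspace_inter zl_subspace vec.subspace_span)
  have uU: "\<forall>j\<in>I. emb (x j) \<in> ?U \<and> dotc (a j) (emb (x j)) \<noteq> 0"
  proof
    fix j assume j: "j \<in> I"
    have BE: "b \<in> E" if "b \<in> B" for b
      unfolding E_def using that vec.subspace_0[OF C] by (intro CollectI exI[of _ b] exI[of _ 0]) simp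
    have CE: "c \<in> E" if "c \<in> ?C" for c
      unfolding E_def using that vec.subspace_0[OF B] by (intro CollectI exI[of _ 0] exI[of _ c]) simp
    have "emb (x j) \<in> zero_locus B" using x j BE by (simp add: zl dotc_emb)
    moreover have "\<forall>c\<in>?C. dotk c (x j) = 0" using x j CE by simp
    then have "x j \<in> vec.span (\<Union>i\<in>I. perp (Q i))" by (rule dual[OF Qs])
    then have "emb (x j) \<in> vec.span (\<Union>i\<in>I. zero_locus (Q i))" by (rule span_emb)
    moreover have "dotc (a j) (emb (x j)) \<noteq> 0" using x j by (simp add: dotc_emb)
    ultimately show "emb (x j) \<in> ?U \<and> dotc (a j) (emb (x j)) \<noteq> 0" by simp
  qed
  obtain Xg where Xg: "Xg \<in> ?U" "\<forall>j\<in>I. dotc (a j) Xg \<noteq> 0" using gen[OF U I uU] by metis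
  then have "Xg \<in> (\<Union>i\<in>I. zero_locus (Q i))" using LJ by (metis IntD2 IntI Int_iff)
  then obtain j where j: "j \<in> I" "Xg \<in> zero_locus (Q j)" by (meson UN_E)
  then have "dotc (a j) Xg = 0" using a by (simp add: zl)
  with Xg(2) j(1) show False by simp
qed

lemma mon_single: "monac x (Poly_Mapping.single i 1) = x $ i"
proof -
  have "monac x (Poly_Mapping.single i 1) = (\<Prod>j\<in>UNIV. if i = j then x $ j else 1)"
    unfolding monac_def by (rule prod.cong[OF refl]) (simp add: lookup_single)
  also have "\<dots> = x $ i" by simp
  finally show ?thesis .
qed

lemma ev_lin_form: "ev x (lin_form c) = dotc c x"
  unfolding lin_form_def dotc_def ev_sum ev_single mon_single by simp


lemma gen_in: "g \<in> G \<Longrightarrow> g \<in> gen_ideal G"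
  unfolding gen_ideal_def
  by (intro CollectI exI[of _ "{g}"] exI[of _ "\<lambda>_. 1"]) simp

lemma gen_zero: "0 \<in> gen_ideal G"
  unfolding gen_ideal_def
  by (intro CollectI exI[of _ "{}"] exI[of _ "\<lambda>_. 1"]) simp

lemma gen_mult: "p \<in> gen_ideal G \<Longrightarrow> r * p \<in> gen_ideal G"
proof -
  assume "p \<in> gen_ideal G"
  then obtain F a where F: "finite F" "F \<subseteq> G" "p = (\<Sum>g\<in>F. a g * g)"
    unfolding gen_ideal_def by (elim CollectE exE conjE)
  have "r * p = (\<Sum>g\<in>F. (r * a g) * g)" using F(3) by (simp add: sum_distrib_left mult_ac)
  then show ?thesis unfolding gen_ideal_def using F(1,2) by (intro CollectI exI conjI)
qed

lemma gen_add: "p \<in> gen_ideal G \<Longrightarrow> q \<in> gen_ideal G \<Longrightarrow> p + q \<in> gen_ideal G"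
proof -
  assume "p \<in> gen_ideal G" "q \<in> gen_ideal G"
  then obtain F a F' a' where F: "finite F" "F \<subseteq> G" "p = (\<Sum>g\<in>F. a g * g)"
    and F': "finite F'" "F' \<subseteq> G" "q = (\<Sum>g\<in>F'. a' g * g)"
    unfolding gen_ideal_def by (elim CollectE exE conjE)
  define b where "b g = (if g \<in> F then a g else 0) + (if g \<in> F' then a' g else 0)" for g
  have fin: "finite (F \<union> F')" using F F' by simp
  have "(\<Sum>g\<in>F \<union> F'. b g * g) = (\<Sum>g\<in>F \<union> F'. (if g \<in> F then a g * g else 0)) + (\<Sum>g\<in>F \<union> F'. (if g \<in> F' then a' g * g else 0))"
    unfolding sum.distrib[symmetric] by (rule sum.cong[OF refl]) (simp add: b_def distrib_right)
  also have "\<dots> = p + q"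
  proof -
    have e1: "(F \<union> F') \<inter> F = F" and e2: "(F \<union> F') \<inter> F' = F'" by auto
    show ?thesis by (simp only: sum.inter_restrict[OF fin, symmetric] e1 e2 F(3) F'(3))
  qed
  finally have "p + q = (\<Sum>g\<in>F \<union> F'. b g * g)" by simp
  then show ?thesis unfolding gen_ideal_def using fin F(2) F'(2) by (intro CollectI exI conjI) simp_all
qed

lemma gen_sum: "finite F \<Longrightarrow> (\<And>g. g \<in> F \<Longrightarrow> f g \<in> gen_ideal H) \<Longrightarrow> (\<Sum>g\<in>F. f g) \<in> gen_ideal H"
proof (induction F rule: finite_induct)
  case empty then show ?case by (simp add: gen_zero)
next
  case (insert x F) then show ?case by (simp add: gen_add)
qed

lemma gen_subset: "G \<subseteq> gen_ideal H \<Longrightarrow> gen_ideal G \<subseteq> gen_ideal H"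
proof
  fix p assume G: "G \<subseteq> gen_ideal H" and "p \<in> gen_ideal G"
  then obtain F a where F: "finite F" "F \<subseteq> G" "p = (\<Sum>g\<in>F. a g * g)"
    unfolding gen_ideal_def by (elim CollectE exE conjE)
  have "(\<Sum>g\<in>F. a g * g) \<in> gen_ideal H"
    by (rule gen_sum[OF F(1)]) (rule gen_mult, use F(2) G in fast)
  then show "p \<in> gen_ideal H" using F(3) by simp
qed

lemma gen_ev: "(\<And>g. g \<in> G \<Longrightarrow> ev x g = 0) \<Longrightarrow> p \<in> gen_ideal G \<Longrightarrow> ev x p = 0"
proof -
  assume G: "\<And>g. g \<in> G \<Longrightarrow> ev x g = 0" and "p \<in> gen_ideal G"
  then obtain F a where F: "finite F" "F \<subseteq> G" "p = (\<Sum>g\<in>F. a g * g)"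
    unfolding gen_ideal_def by (elim CollectE exE conjE)
  have "ev x p = (\<Sum>g\<in>F. ev x (a g) * ev x g)" using F(3) by (simp add: ev_sum ev_mult)
  also have "\<dots> = 0" by (rule sum.neutral) (use F(2) G in force)
  finally show ?thesis .
qed

lemma lin_form_add: "lin_form (x + y) = lin_form x + lin_form y"
  unfolding lin_form_def by (simp add: single_add sum.distrib)

lemma complement:
  fixes D Q :: "('k::field ^ 'n::finite) set"
  assumes D: "vec.subspace D" and Q: "vec.subspace Q" and DQ: "D \<subseteq> Q"
  shows "\<exists>P. vec.subspace P \<and> direct_sum_eq Q D P"
proof -
  obtain B0 where B0: "B0 \<subseteq> D" "vec.independent B0" "D \<subseteq> vec.span B0" "card B0 = vec.dim D"
    by (rule vec.basis_exists)
  have B0Q: "B0 \<subseteq> Q" using B0(1) DQ by (rule order_trans)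
  obtain B where B: "B0 \<subseteq> B" "B \<subseteq> Q" "vec.independent B" "Q \<subseteq> vec.span B"
    by (rule vec.maximal_independent_subset_extend[OF B0Q B0(2)])
  define P where "P = vec.span (B - B0)"
  have spB0: "vec.span B0 \<subseteq> D" using B0(1) D by (rule vec.span_minimal)
  have PQ: "P \<subseteq> Q" unfolding P_def by (rule vec.span_minimal[OF _ Q]) (use B(2) in fast)
  have "Q = {d + p | d p. d \<in> D \<and> p \<in> P}"
  proof (intro equalityI subsetI)
    fix q assume "q \<in> Q"
    have eqB: "B0 \<union> (B - B0) = B" using B(1) by auto
    have "q \<in> vec.span B" using B(4) \<open>q \<in> Q\<close> by (rule subsetD)
    then have "q \<in> vec.span (B0 \<union> (B - B0))" unfolding eqB .
    then obtain d p where "q = d + p" "d \<in> vec.span B0" "p \<in> vec.span (B - B0)"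
      unfolding vec.span_Un by (elim CollectE exE conjE)
    then show "q \<in> {d + p | d p. d \<in> D \<and> p \<in> P}" using spB0 unfolding P_def by (intro CollectI exI conjI) auto
  next
    fix q assume "q \<in> {d + p | d p. d \<in> D \<and> p \<in> P}"
    then obtain d p where "q = d + p" "d \<in> D" "p \<in> P" by (elim CollectE exE conjE)
    then show "q \<in> Q" using DQ PQ vec.subspace_add[OF Q] by auto
  qed
  moreover have "D \<inter> P = {0}"
  proof (intro equalityI subsetI)
    fix x assume x: "x \<in> D \<inter> P"
    then have x1: "x \<in> vec.span B0" and x2: "x \<in> vec.span (B - B0)" using B0(3) unfolding P_def by auto
    have r1: "vec.representation B x = vec.representation B0 x"
      by (rule vec.representation_extend[OF B(3) x1 B(1)])
    have r2: "vec.representation B x = vec.representation (B - B0) x"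
      by (rule vec.representation_extend[OF B(3) x2]) auto
    have r0: "vec.representation B x b = 0" for b
    proof (rule ccontr)
      assume ne: "vec.representation B x b \<noteq> 0"
      then have "b \<in> B0" using r1 vec.representation_ne_zero[of B0 x b] by simp
      moreover have "b \<in> B - B0" using ne r2 vec.representation_ne_zero[of "B - B0" x b] by simp
      ultimately show False by simp
    qed
    have xB: "x \<in> vec.span B" using vec.span_mono[OF B(1)] x1 by (rule subsetD)
    have "(\<Sum>b | vec.representation B x b \<noteq> 0. vec.representation B x b *s b) = x"
      by (rule vec.sum_nonzero_representation_eq[OF B(3) xB])
    then show "x \<in> {0}" using r0 by simp
  next
    fix x assume "x \<in> {0::'k^'n}"
    then show "x \<in> D \<inter> P" using vec.subspace_0[OF D] vec.span_zero unfolding P_def by simp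
  qed
  moreover have "vec.subspace P" unfolding P_def by simp
  ultimately show ?thesis unfolding direct_sum_eq_def by (intro exI[of _ P] conjI)
qed


lemma span_zl: "vec.span (zero_locus Q) = zero_locus Q"
  by (simp add: zl_subspace)

lemma chain_sub:
  fixes l i j :: nat
  assumes ch: "\<forall>i\<in>{1..<l}. D (i+1) \<subseteq> D i"
  shows "1 \<le> j \<Longrightarrow> j \<le> i \<Longrightarrow> i \<le> l \<Longrightarrow> D i \<subseteq> D j"
proof (induction i)
  case 0 then show ?case by simp
next
  case (Suc i)
  show ?case
  proof (cases "j = Suc i")
    case True then show ?thesis by simp
  next
    case False
    then have ji: "j \<le> i" using Suc.prems by simp
    have "i \<in> {1..<l}" using Suc.prems ji by simp
    then have "D (Suc i) \<subseteq> D i" using ch by simp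
    also have "D i \<subseteq> D j" using Suc.IH Suc.prems ji by simp
    finally show ?thesis .
  qed
qed

lemma prod_in_lin_ideal:
  assumes A: "finite A" "j \<in> A" and c: "c j \<in> Qj"
  shows "(\<Prod>i\<in>A. lin_form (c i)) \<in> lin_ideal Qj"
proof -
  have "(\<Prod>i\<in>A. lin_form (c i)) = (\<Prod>i\<in>A - {j}. lin_form (c i)) * lin_form (c j)"
    using prod.remove[OF A, of "\<lambda>i. lin_form (c i)"] by (simp add: mult.commute)
  moreover have "lin_form (c j) \<in> gen_ideal (lin_form ` Qj)" using c by (intro gen_in imageI)
  ultimately show ?thesis unfolding lin_ideal_def by (simp add: gen_mult)
qed

theorem mainTheorem3:
  fixes Q :: "nat \<Rightarrow> ('k::field ^ 'n::finite) set" and l :: nat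
  assumes "l \<ge> 2"
    and "\<forall>i\<in>{1..l}. vec.subspace (Q i)"
  shows "ideals_linearly_joined Q l \<longleftrightarrow>
    (\<exists>D P :: nat \<Rightarrow> ('k ^ 'n) set.
       (\<forall>i\<in>{1..l}. vec.subspace (D i) \<and> vec.subspace (P i)) \<and>
       D l = {0} \<and> P 1 = {0} \<and>
       (\<forall>i\<in>{1..l}. direct_sum_eq (Q i) (D i) (P i)) \<and>
       (\<forall>i\<in>{1..<l}. D (i+1) \<subseteq> D i) \<and>
       (\<forall>k\<in>{2..l}. (\<Inter>j\<in>{1..k-1}. lin_ideal (Q j)) \<subseteq> gen_ideal (lin_form ` (P k \<union> D (k-1)))))"
proof
  assume LJ0: "ideals_linearly_joined Q l"
  have l2: "l \<ge> 2" and Qs: "\<forall>i\<in>{1..l}. vec.subspace (Q i)" using assms by simp_all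
  have LJ: "zero_locus (Q (i+1)) \<inter> (\<Union>j\<in>{1..i}. zero_locus (Q j)) = zero_locus (Q (i+1)) \<inter> vec.span (\<Union>j\<in>{1..i}. zero_locus (Q j))"
    if "i \<in> {1..<l}" for i
    using LJ0 that unfolding ideals_linearly_joined_def linearly_joined_def span_zl by simp
  define Cap where "Cap k = (\<Inter>j\<in>{1..k}. Q j)" for k
  have Capsub: "vec.subspace (Cap k)" if "k \<le> l" for k
    unfolding Cap_def using Qs that by (intro vec.subspace_Int) simp
  have CapQ: "Cap k \<subseteq> Q k" if "k \<in> {1..l}" for k
    unfolding Cap_def using that by (intro INT_lower) simp
  have Cap1: "Cap 1 = Q 1" by (simp add: Cap_def)
  have CapMono: "Cap k \<subseteq> Cap i" if "i \<le> k" for i k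
    unfolding Cap_def using that by (intro INT_anti_mono) simp_all
  have "\<forall>i. \<exists>P. i \<in> {1..l} \<longrightarrow> vec.subspace P \<and> direct_sum_eq (Q i) (Cap i) P"
  proof
    fix i show "\<exists>P. i \<in> {1..l} \<longrightarrow> vec.subspace P \<and> direct_sum_eq (Q i) (Cap i) P"
    proof (cases "i \<in> {1..l}")
      case True
      have s1: "vec.subspace (Cap i)" using True by (intro Capsub) simp
      have s2: "vec.subspace (Q i)" using Qs True by simp
      show ?thesis using complement[OF s1 s2 CapQ[OF True]] by simp
    next
      case False
      show ?thesis by (intro exI[of _ "{}"] impI) (use False in contradiction)
    qed
  qed
  from choice[OF this] obtain Pc where Pc0: "\<forall>i. i \<in> {1..l} \<longrightarrow> vec.subspace (Pc i) \<and> direct_sum_eq (Q i) (Cap i) (Pc i)"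
    by metis
  have Pc: "vec.subspace (Pc i) \<and> direct_sum_eq (Q i) (Cap i) (Pc i)" if "i \<in> {1..l}" for i
    using Pc0 that by simp
  define D :: "nat \<Rightarrow> ('k ^ 'n) set" where "D i = (if i < l then Cap i else {0})" for i
  define P :: "nat \<Rightarrow> ('k ^ 'n) set" where "P i = (if i = 1 then {0} else if i = l then Q l else Pc i)" for i
  have Q0: "0 \<in> Q i" if "i \<in> {1..l}" for i
  proof -
    have "vec.subspace (Q i)" using Qs that by simp
    then show ?thesis by (rule vec.subspace_0)
  qed
  have Di: "D i = Cap i" if "i < l" for i using that by (simp add: D_def)
  show "\<exists>D P :: nat \<Rightarrow> ('k ^ 'n) set.
       (\<forall>i\<in>{1..l}. vec.subspace (D i) \<and> vec.subspace (P i)) \<and>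
       D l = {0} \<and> P 1 = {0} \<and>
       (\<forall>i\<in>{1..l}. direct_sum_eq (Q i) (D i) (P i)) \<and>
       (\<forall>i\<in>{1..<l}. D (i+1) \<subseteq> D i) \<and>
       (\<forall>k\<in>{2..l}. (\<Inter>j\<in>{1..k-1}. lin_ideal (Q j)) \<subseteq> gen_ideal (lin_form ` (P k \<union> D (k-1))))"
  proof (rule exI[of _ D], rule exI[of _ P], intro conjI)
    show "\<forall>i\<in>{1..l}. vec.subspace (D i) \<and> vec.subspace (P i)"
    proof
      fix i assume i: "i \<in> {1..l}"
      have "vec.subspace (D i)" unfolding D_def using Capsub i by simp
      moreover have "vec.subspace (P i)" unfolding P_def using Pc[OF i] Qs l2 i by simp
      ultimately show "vec.subspace (D i) \<and> vec.subspace (P i)" ..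
    qed
  next
    show "D l = {0}" by (simp add: D_def)
  next
    show "P 1 = {0}" by (simp add: P_def)
  next
    show "\<forall>i\<in>{1..l}. direct_sum_eq (Q i) (D i) (P i)"
    proof
    fix i assume i: "i \<in> {1..l}"
    show "direct_sum_eq (Q i) (D i) (P i)"
    proof (cases "i = l")
      case True
      have "Q l = {d + p | d p. d \<in> {0} \<and> p \<in> Q l}" by simp
      moreover have "{0} \<inter> Q l = {0}" using Q0[of l] l2 by simp
      ultimately show ?thesis using True l2 unfolding direct_sum_eq_def D_def P_def by simp
    next
      case False
      then have il: "i < l" using i by simp
      show ?thesis
      proof (cases "i = 1")
        case True
        have "Q 1 = {d + p | d p. d \<in> Q 1 \<and> p \<in> {0}}" by simp
        moreover have "Q 1 \<inter> {0} = {0}" using Q0[of 1] l2 by simp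
        ultimately show ?thesis using True il Cap1 unfolding direct_sum_eq_def D_def P_def by simp
      next
        case False
        then show ?thesis using Pc[OF i] il unfolding D_def P_def by simp
      qed
    qed
    qed
  next
    show "\<forall>i\<in>{1..<l}. D (i+1) \<subseteq> D i"
    proof
    fix i assume i: "i \<in> {1..<l}"
    show "D (i+1) \<subseteq> D i"
    proof (cases "i + 1 < l")
      case True
      then show ?thesis using CapMono[of i "i+1"] i by (simp add: D_def)
    next
      case False
      then have "D (i+1) = {0}" by (simp add: D_def)
      moreover have "0 \<in> D i" using i Capsub[of i] by (simp add: D_def vec.subspace_0)
      ultimately show ?thesis by simp
    qed
    qed
  next
    show "\<forall>k\<in>{2..l}. (\<Inter>j\<in>{1..k-1}. lin_ideal (Q j)) \<subseteq> gen_ideal (lin_form ` (P k \<union> D (k-1)))"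
    proof
    fix k assume k: "k \<in> {2..l}"
    define i where "i = k - 1"
    have k2: "2 \<le> k" "k \<le> l" using k by simp_all
    have i: "i \<in> {1..<l}" "k = i + 1" using k2 unfolding i_def atLeastLessThan_iff by arith+
    have Qs': "\<forall>j\<in>{1..i}. vec.subspace (Q j)" using Qs i by simp
    have Qk: "vec.subspace (Q k)" using Qs k by simp
    obtain j where j: "j \<in> {1..i}" and hj: "\<forall>a\<in>Q j. \<exists>b\<in>Q k. \<exists>c\<in>(\<Inter>j\<in>{1..i}. Q j). a = b + c"
      using key[OF Qs' Qk _ LJ[OF i(1), folded i(2)]] by auto
    have Dik: "D (k-1) = Cap i" using i Di by simp
    have decomp: "\<exists>p\<in>P k. \<exists>d\<in>Cap i. b = p + d" if b: "b \<in> Q k" for b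
    proof (cases "k = l")
      case True
      then have "P k = Q k" using l2 by (simp add: P_def)
      moreover have "0 \<in> Cap i" using Capsub[of i] i by (simp add: vec.subspace_0)
      ultimately show ?thesis using b by (intro bexI[of _ b] bexI[of _ 0]) simp_all
    next
      case False
      then have "k \<noteq> 1" "k < l" using k by simp_all
      then have "P k = Pc k" by (simp add: P_def)
      moreover obtain d p where "b = d + p" "d \<in> Cap k" "p \<in> Pc k"
        using Pc[of k] k b unfolding direct_sum_eq_def by auto
      moreover have "Cap k \<subseteq> Cap i" using CapMono i by simp
      ultimately show ?thesis by (intro bexI[of _ p] bexI[of _ d]) (auto simp: add.commute)
    qed
    have gens: "lin_form ` Q j \<subseteq> gen_ideal (lin_form ` (P k \<union> D (k-1)))"
    proof
      fix g assume "g \<in> lin_form ` Q j"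
      then obtain a where a: "a \<in> Q j" "g = lin_form a" by (elim imageE)
      obtain b c where bc: "b \<in> Q k" "c \<in> (\<Inter>j\<in>{1..i}. Q j)" "a = b + c" using hj a(1) by metis
      obtain p d where pd: "p \<in> P k" "d \<in> Cap i" "b = p + d" using decomp[OF bc(1)] by metis
      have dc: "d + c \<in> Cap i" using vec.subspace_add[OF Capsub[of i] pd(2)] bc(2) i unfolding Cap_def by simp
      have "g = lin_form p + lin_form (d + c)" using a(2) bc(3) pd(3) by (simp add: lin_form_add[symmetric] add.assoc)
      moreover have "lin_form p \<in> gen_ideal (lin_form ` (P k \<union> D (k-1)))" using pd(1) by (intro gen_in imageI) simp
      moreover have "lin_form (d + c) \<in> gen_ideal (lin_form ` (P k \<union> D (k-1)))" using dc Dik by (intro gen_in imageI) simp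
      ultimately show "g \<in> gen_ideal (lin_form ` (P k \<union> D (k-1)))" by (simp add: gen_add)
    qed
    have "(\<Inter>j\<in>{1..k-1}. lin_ideal (Q j)) \<subseteq> lin_ideal (Q j)" using j i by (intro INT_lower) simp
    also have "\<dots> \<subseteq> gen_ideal (lin_form ` (P k \<union> D (k-1)))" unfolding lin_ideal_def by (rule gen_subset[OF gens])
    finally show "(\<Inter>j\<in>{1..k-1}. lin_ideal (Q j)) \<subseteq> gen_ideal (lin_form ` (P k \<union> D (k-1)))" .
    qed
  qed
next
  assume "\<exists>D P :: nat \<Rightarrow> ('k ^ 'n) set.
       (\<forall>i\<in>{1..l}. vec.subspace (D i) \<and> vec.subspace (P i)) \<and>
       D l = {0} \<and> P 1 = {0} \<and>
       (\<forall>i\<in>{1..l}. direct_sum_eq (Q i) (D i) (P i)) \<and>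
       (\<forall>i\<in>{1..<l}. D (i+1) \<subseteq> D i) \<and>
       (\<forall>k\<in>{2..l}. (\<Inter>j\<in>{1..k-1}. lin_ideal (Q j)) \<subseteq> gen_ideal (lin_form ` (P k \<union> D (k-1))))"
  then obtain D P :: "nat \<Rightarrow> ('k ^ 'n) set" where
    sub: "\<forall>i\<in>{1..l}. vec.subspace (D i) \<and> vec.subspace (P i)"
    and ds: "\<forall>i\<in>{1..l}. direct_sum_eq (Q i) (D i) (P i)"
    and ch: "\<forall>i\<in>{1..<l}. D (i+1) \<subseteq> D i"
    and cc: "\<forall>k\<in>{2..l}. (\<Inter>j\<in>{1..k-1}. lin_ideal (Q j)) \<subseteq> gen_ideal (lin_form ` (P k \<union> D (k-1)))"
    by (elim exE conjE)
  have DQ: "D i \<subseteq> Q i" if i: "i \<in> {1..l}" for i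
  proof
    fix d assume "d \<in> D i"
    moreover have "0 \<in> P i" using sub i by (simp add: vec.subspace_0)
    ultimately have "d + 0 \<in> {d + p | d p. d \<in> D i \<and> p \<in> P i}" by (intro CollectI exI conjI) (rule refl)
    then show "d \<in> Q i" using ds i unfolding direct_sum_eq_def by simp
  qed
  have PQ: "P i \<subseteq> Q i" if i: "i \<in> {1..l}" for i
  proof
    fix p assume "p \<in> P i"
    moreover have "0 \<in> D i" using sub i by (simp add: vec.subspace_0)
    ultimately have "0 + p \<in> {d + p | d p. d \<in> D i \<and> p \<in> P i}" by (intro CollectI exI conjI) (rule refl)
    then show "p \<in> Q i" using ds i unfolding direct_sum_eq_def by simp
  qed
  show "ideals_linearly_joined Q l"
    unfolding ideals_linearly_joined_def linearly_joined_def
  proof (intro ballI)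
    fix i assume i: "i \<in> {1..<l}"
    let ?U = "\<Union>j\<in>{1..i}. zero_locus (Q j)"
    have spW: "vec.span (zero_locus (Q (i+1))) = zero_locus (Q (i+1))" by (simp add: zl_subspace)
    have "zero_locus (Q (i+1)) \<inter> vec.span ?U \<subseteq> zero_locus (Q (i+1)) \<inter> ?U"
    proof
      fix x assume x: "x \<in> zero_locus (Q (i+1)) \<inter> vec.span ?U"
      show "x \<in> zero_locus (Q (i+1)) \<inter> ?U"
      proof (rule ccontr)
        assume "x \<notin> zero_locus (Q (i+1)) \<inter> ?U"
        then have nx: "\<forall>j\<in>{1..i}. x \<notin> zero_locus (Q j)" using x by simp
        have "\<forall>j\<in>{1..i}. \<exists>c\<in>Q j. dotc c x \<noteq> 0" using nx by (simp add: zl)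
        then obtain c where c: "\<forall>j\<in>{1..i}. c j \<in> Q j \<and> dotc (c j) x \<noteq> 0" by metis
        define F where "F = (\<Prod>j\<in>{1..i}. lin_form (c j))"
        have "F \<in> (\<Inter>j\<in>{1..(i+1)-1}. lin_ideal (Q j))"
          unfolding F_def using c by (simp add: prod_in_lin_ideal)
        moreover have "i + 1 \<in> {2..l}" using i by simp
        ultimately have FG: "F \<in> gen_ideal (lin_form ` (P (i+1) \<union> D i))" using cc by fastforce
        have "ev x F = (\<Prod>j\<in>{1..i}. dotc (c j) x)" unfolding F_def by (simp add: ev_prod ev_lin_form)
        also have "\<dots> \<noteq> 0" using c by simp
        finally have evF: "ev x F \<noteq> 0" .
        have "ev x g = 0" if g: "g \<in> lin_form ` (P (i+1) \<union> D i)" for g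
        proof -
          obtain e where e: "e \<in> P (i+1) \<union> D i" "g = lin_form e" using g by (elim imageE)
          have "dotc e x = 0"
          proof (cases "e \<in> P (i+1)")
            case True
            then have "e \<in> Q (i+1)" using PQ[of "i+1"] i by auto
            then show ?thesis using x by (simp add: zl)
          next
            case False
            then have eD: "e \<in> D i" using e(1) by simp
            have eQ: "e \<in> Q j" if "j \<in> {1..i}" for j
            proof -
              have "D i \<subseteq> D j" using chain_sub[OF ch, of j i] that i by simp
              also have "D j \<subseteq> Q j" using DQ that i by simp
              finally show ?thesis using eD by (rule subsetD)
            qed
            have Z: "vec.subspace {y. dotc e y = 0}"
              unfolding vec.subspace_def by (simp add: dotc_add dotc_scale dotc_zero)
            have "?U \<subseteq> {y. dotc e y = 0}" using eQ by (auto simp: zl)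
            then have "vec.span ?U \<subseteq> {y. dotc e y = 0}" using Z by (rule vec.span_minimal)
            then show ?thesis using x by auto
          qed
          then show ?thesis using e(2) by (simp add: ev_lin_form)
        qed
        then have "ev x F = 0" using FG by (rule gen_ev)
        with evF show False by simp
      qed
    qed
    moreover have "?U \<subseteq> vec.span ?U" by (rule vec.span_superset)
    ultimately show "zero_locus (Q (i+1)) \<inter> ?U = vec.span (zero_locus (Q (i+1))) \<inter> vec.span ?U"
      unfolding spW by (intro equalityI) (fast, fast)
  qed
qed

end
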